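(* Let $\mathbf{X}\sim\mathcal{N}(\mathbf{0}_n,\mathbf{I}_n)$ and let $\mathbf{Y}|\mathbf{X}=\mathbf{x}\sim\mathcal{N}(\mathbf{x},\sigma^2\mathbf{I}_n)$ with fixed $\sigma>0$. Then $$\lim_{n\to\infty}\frac{\mathrm{mmse}(\vec{\mathbf{X}}|\vec{\mathbf{Y}})}{n}=\lim_{n\to\infty}\frac{\mathrm{mmse}(\vec{\mathbf{X}}|\mathbf{Y})}{n}=0.$$
   Context: $\vec{\mathbf{X}},\vec{\mathbf{Y}}$ are $\mathbf{X},\mathbf{Y}$ with entries sorted in ascending order. For random vectors $\mathbf{V},\mathbf{U}$, $\mathrm{mmse}(\mathbf{V}|\mathbf{U})=\mathbb{E}\left[\|\mathbf{V}-\mathbb{E}[\mathbf{V}|\mathbf{U}]\|^2\right]$ with $\|\cdot\|$ the Euclidean norm. *)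

theory Defs
  imports "HOL-Probability.Probability"
begin

definition std_normal :: "real measure" where
  "std_normal = density lborel std_normal_density"

text \<open>Probability space for dimension n: outcome (x, z) with x, z independent
  standard normal vectors in R^n (coordinates indexed by {..<n}).
  Then X = x ~ N(0, I_n) and Y = x + sigma z, so Y | X = x ~ N(x, sigma^2 I_n).\<close>
definition Omega :: "nat \<Rightarrow> ((nat \<Rightarrow> real) \<times> (nat \<Rightarrow> real)) measure" where
  "Omega n = (PiM {..<n} (\<lambda>_. std_normal)) \<Otimes>\<^sub>M (PiM {..<n} (\<lambda>_. std_normal))"

definition Xv :: "nat \<Rightarrow> (nat \<Rightarrow> real) \<times> (nat \<Rightarrow> real) \<Rightarrow> real" where
  "Xv i \<omega> = fst \<omega> i"

definition Yv :: "real \<Rightarrow> nat \<Rightarrow> (nat \<Rightarrow> real) \<times> (nat \<Rightarrow> real) \<Rightarrow> real" where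
  "Yv \<sigma> i \<omega> = fst \<omega> i + \<sigma> * snd \<omega> i"

definition sort_vec :: "nat \<Rightarrow> (nat \<Rightarrow> 'a \<Rightarrow> real) \<Rightarrow> nat \<Rightarrow> 'a \<Rightarrow> real" where
  "sort_vec n V i \<omega> = sort (map (\<lambda>j. V j \<omega>) [0..<n]) ! i"

definition gen_sigma :: "'a measure \<Rightarrow> nat \<Rightarrow> (nat \<Rightarrow> 'a \<Rightarrow> real) \<Rightarrow> 'a measure" where
  "gen_sigma M n U = sigma (space M) {U i -` B \<inter> space M | i B. i < n \<and> B \<in> sets borel}"

definition mmse :: "'a measure \<Rightarrow> nat \<Rightarrow> (nat \<Rightarrow> 'a \<Rightarrow> real) \<Rightarrow> (nat \<Rightarrow> 'a \<Rightarrow> real) \<Rightarrow> real" where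
  "mmse M n V U = (\<integral>\<omega>. (\<Sum>i<n. (V i \<omega> - real_cond_exp M (gen_sigma M n U) (V i) \<omega>)\<^sup>2) \<partial>M)"

end

theory Submission
  imports Defs "HOL-Real_Asymp.Real_Asymp"
begin


lemma sorted_nth_le_iff:
  fixes ys :: "real list"
  shows "sorted ys \<Longrightarrow> i < length ys \<Longrightarrow> (ys ! i \<le> t) = (i < length (filter (\<lambda>x. x \<le> t) ys))"
proof (induction ys arbitrary: i)
  case Nil then show ?case by simp
next
  case (Cons y zs)
  show ?case
  proof (cases "y \<le> t")
    case True
    then show ?thesis using Cons by (cases i) auto
  next
    case False
    have "\<forall>z\<in>set zs. t < z" using Cons.prems False by auto
    then have "filter (\<lambda>x. x \<le> t) zs = []" by (auto simp: filter_empty_conv)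
    moreover have "t < (y # zs) ! i" using Cons.prems False \<open>\<forall>z\<in>set zs. t < z\<close>
      by (cases i) auto
    ultimately show ?thesis using False by auto
  qed
qed

definition srt :: "nat \<Rightarrow> (nat \<Rightarrow> real) \<Rightarrow> nat \<Rightarrow> real" where
  "srt n x i = sort (map x [0..<n]) ! i"

lemma srt_le_iff:
  assumes "i < n"
  shows "(srt n x i \<le> t) = (i < card {k. k < n \<and> x k \<le> t})"
proof -
  have "length (filter (\<lambda>y. y \<le> t) (sort (map x [0..<n]))) = length (filter (\<lambda>y. y \<le> t) (map x [0..<n]))"
    by (metis mset_filter mset_sort size_mset)
  also have "\<dots> = card {k. k < n \<and> x k \<le> t}"
    by (simp add: length_filter_conv_card) (rule arg_cong[where f=card], auto)
  finally show ?thesis unfolding srt_def using assms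
    by (subst sorted_nth_le_iff) auto
qed

lemma srt_sum:
  "(\<Sum>i<n. h (srt n x i)) = (\<Sum>k<n. h (x k))"
proof -
  have "(\<Sum>i<n. h (srt n x i)) = sum_list (map h (sort (map x [0..<n])))"
    unfolding srt_def by (simp add: sum_list_sum_nth atLeast0LessThan)
  also have "\<dots> = sum_list (map h (map x [0..<n]))"
    by (metis mset_map mset_sort sum_mset_sum_list)
  also have "\<dots> = (\<Sum>k<n. h (x k))"
    by (simp add: sum_list_sum_nth atLeast0LessThan)
  finally show ?thesis .
qed

lemma count_diff:
  "(\<Sum>i<n. \<bar>(if N \<le> i then 1 else 0) - (if M \<le> i then 1 else (0::real))\<bar>) \<le> \<bar>real N - real M\<bar>"
proof -
  have gen: "(\<Sum>i<n. \<bar>(if A \<le> i then 1 else 0) - (if B \<le> i then 1 else (0::real))\<bar>) \<le> real B - real A"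
    if "A \<le> B" for A B :: nat
  proof -
    have "(\<Sum>i<n. \<bar>(if A \<le> i then 1 else 0) - (if B \<le> i then 1 else (0::real))\<bar>)
        = (\<Sum>i<n. (if i \<in> {A..<B} then 1 else 0))"
      by (rule sum.cong) (use that in auto)
    also have "\<dots> = real (card ({..<n} \<inter> {A..<B}))"
    proof -
      have e: "{..<n} \<inter> {i. A \<le> i \<and> i < B} = {..<n} \<inter> {A..<B}" by auto
      show ?thesis by (simp add: sum.If_cases e)
    qed
    also have "\<dots> \<le> real (card {A..<B})"
      by (simp add: card_mono del: card_atLeastLessThan)
    finally show ?thesis using that by simp
  qed
  show ?thesis
  proof (cases "N \<le> M")
    case True then show ?thesis using gen[OF True] by simp
  next
    case False
    then have "M \<le> N" by simp
    from gen[OF this] show ?thesis by (simp add: abs_minus_commute)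
  qed
qed



definition gp :: "real \<Rightarrow> nat \<Rightarrow> nat \<Rightarrow> real" where
  "gp K m j = -K + real j * (2*K/real m)"
definition phi :: "real \<Rightarrow> nat \<Rightarrow> real \<Rightarrow> real" where
  "phi K m y = -K + (2*K/real m) * (\<Sum>j<m. if gp K m j < y then 1 else 0)"
definition cvec :: "real \<Rightarrow> nat \<Rightarrow> (nat \<Rightarrow> nat) \<Rightarrow> nat \<Rightarrow> real" where
  "cvec K m M i = -K + (2*K/real m) * (\<Sum>j<m. if M j \<le> i then 1 else 0)"

lemma sum01_bounds:
  "0 \<le> (\<Sum>j<m. if P j then 1 else (0::real)) \<and> (\<Sum>j<m. if P j then 1 else (0::real)) \<le> real m"
proof
  show "0 \<le> (\<Sum>j<m. if P j then 1 else (0::real))" by (simp add: sum_nonneg)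
  have "(\<Sum>j<m. if P j then 1 else (0::real)) \<le> (\<Sum>j<m. 1)" by (rule sum_mono) auto
  then show "(\<Sum>j<m. if P j then 1 else (0::real)) \<le> real m" by simp
qed

lemma phi_bounds:
  assumes "K > 0" "m > 0"
  shows "-K \<le> phi K m y \<and> phi K m y \<le> K"
proof -
  let ?S = "(\<Sum>j<m. if gp K m j < y then 1 else (0::real))"
  have s: "0 \<le> ?S \<and> ?S \<le> real m" by (rule sum01_bounds)
  have "(2*K/real m) * ?S \<le> (2*K/real m) * real m"
    using s assms by (intro mult_left_mono) auto
  also have "\<dots> = 2*K" using assms by simp
  finally have "(2*K/real m) * ?S \<le> 2*K" .
  moreover have "0 \<le> (2*K/real m) * ?S" using s assms by simp
  ultimately show ?thesis unfolding phi_def by linarith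
qed

lemma cvec_bounds:
  assumes "K > 0" "m > 0"
  shows "-K \<le> cvec K m M i \<and> cvec K m M i \<le> K"
proof -
  let ?S = "(\<Sum>j<m. if M j \<le> i then 1 else (0::real))"
  have s: "0 \<le> ?S \<and> ?S \<le> real m" by (rule sum01_bounds)
  have "(2*K/real m) * ?S \<le> (2*K/real m) * real m"
    using s assms by (intro mult_left_mono) auto
  also have "\<dots> = 2*K" using assms by simp
  finally have "(2*K/real m) * ?S \<le> 2*K" .
  moreover have "0 \<le> (2*K/real m) * ?S" using s assms by simp
  ultimately show ?thesis unfolding cvec_def by linarith
qed

lemma phi_close:
  assumes "K > 0" "m > 0" "\<bar>y\<bar> \<le> K"
  shows "\<bar>y - phi K m y\<bar> \<le> 2*K/real m"
proof -
  define d where "d = 2*K/real m"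
  have d: "d > 0" using assms by (simp add: d_def)
  define r where "r = (y + K) / d"
  have r0: "0 \<le> r" using assms d by (simp add: r_def)
  have rm: "r \<le> real m" using assms d unfolding r_def d_def by (simp add: field_simps)
  have iff: "gp K m j < y \<longleftrightarrow> j < nat \<lceil>r\<rceil>" for j
  proof -
    have "gp K m j < y \<longleftrightarrow> real j * d < y + K" unfolding gp_def d_def by auto
    also have "\<dots> \<longleftrightarrow> real j < r" using d unfolding r_def by (simp add: pos_less_divide_eq)
    also have "\<dots> \<longleftrightarrow> j < nat \<lceil>r\<rceil>" using r0
      by (metis ceiling_less_iff less_ceiling_iff nat_less_iff of_int_of_nat_eq of_nat_0_le_iff zless_nat_eq_int_zless)
    finally show ?thesis .
  qed
  have cm: "nat \<lceil>r\<rceil> \<le> m" using rm by (simp add: ceiling_le_iff nat_le_iff)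
  have "(\<Sum>j<m. if gp K m j < y then 1 else (0::real)) = (\<Sum>j<m. if j < nat \<lceil>r\<rceil> then 1 else 0)"
    using iff by simp
  also have "\<dots> = real (card ({..<m} \<inter> {j. j < nat \<lceil>r\<rceil>}))"
    by (simp add: sum.If_cases)
  also have "{..<m} \<inter> {j. j < nat \<lceil>r\<rceil>} = {..<nat \<lceil>r\<rceil>}" using less_le_trans[OF _ cm] by blast
  also have "real (card {..<nat \<lceil>r\<rceil>}) = real_of_int \<lceil>r\<rceil>" using r0 by simp
  finally have S: "(\<Sum>j<m. if gp K m j < y then 1 else (0::real)) = real_of_int \<lceil>r\<rceil>" .
  have P: "phi K m y = -K + d * real_of_int \<lceil>r\<rceil>" unfolding phi_def S d_def by simp
  have Y: "y = -K + d * r" using d unfolding r_def by simp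
  have c1: "r \<le> real_of_int \<lceil>r\<rceil>" "real_of_int \<lceil>r\<rceil> < r + 1" by linarith+
  have "phi K m y - y = d * real_of_int \<lceil>r\<rceil> - d * r" using P Y by linarith
  also have "\<dots> = d * (real_of_int \<lceil>r\<rceil> - r)" by (simp add: algebra_simps)
  finally have e: "phi K m y - y = d * (real_of_int \<lceil>r\<rceil> - r)" .
  have nn: "0 \<le> d * (real_of_int \<lceil>r\<rceil> - r)" using d c1 by simp
  have "\<bar>y - phi K m y\<bar> = d * (real_of_int \<lceil>r\<rceil> - r)" using e nn by linarith
  also have "\<dots> \<le> d * 1" using d c1 by (intro mult_left_mono) auto
  finally show ?thesis by (simp add: d_def)
qed

lemma phi_approx:
  assumes "K > 0" "m > 0"
  shows "(y - phi K m y)^2 \<le> (2*K/real m)^2 + 4 * y^4 / K^2"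
proof (cases "\<bar>y\<bar> \<le> K")
  case True
  have "(y - phi K m y)^2 = \<bar>y - phi K m y\<bar>^2" by simp
  also have "\<dots> \<le> (2*K/real m)^2" using phi_close[OF assms True]
    by (intro power_mono) auto
  finally show ?thesis using assms by (simp add: add_increasing2)
next
  case False
  have "\<bar>y - phi K m y\<bar> \<le> 2 * \<bar>y\<bar>" using phi_bounds[OF assms, of y] False by linarith
  then have "(y - phi K m y)^2 \<le> (2*\<bar>y\<bar>)^2"
    by (metis abs_ge_zero power2_abs power_mono)
  also have "\<dots> = 4 * y^2" by (simp add: power_mult_distrib)
  also have "4 * y^2 \<le> 4 * y^4 / K^2"
  proof -
    have "K^2 \<le> y^2" using False assms
      by (metis abs_le_square_iff abs_of_pos less_imp_le nle_le)
    then have "K^2 * y^2 \<le> y^2 * y^2" using mult_right_mono[of "K^2" "y^2" "y^2"] by simp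
    then have "y^2 \<le> y^4 / K^2" using assms by (simp add: field_simps power4_eq_xxxx power2_eq_square)
    then show ?thesis by simp
  qed
  finally show ?thesis by (simp add: add_increasing)
qed



lemma pointwise:
  assumes K: "K > 0" and m: "m > 0"
  shows "(\<Sum>i<n. (srt n x i - cvec K m M i)^2) \<le> 2 * (\<Sum>k<n. (x k - phi K m (x k))^2)
     + 4*K*(2*K/real m) * (\<Sum>j<m. \<bar>real (card {k. k<n \<and> x k \<le> gp K m j}) - real (M j)\<bar>)"
proof -
  define d where "d = 2*K/real m"
  have d: "d > 0" using K m by (simp add: d_def)
  define N where "N j = card {k. k<n \<and> x k \<le> gp K m j}" for j
  define D where "D i = (\<Sum>j<m. \<bar>(if N j \<le> i then 1 else 0) - (if M j \<le> i then 1 else (0::real))\<bar>)" for i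
  have each: "(srt n x i - cvec K m M i)^2 \<le> 2 * (srt n x i - phi K m (srt n x i))^2 + 2 * (2*K*d * D i)"
    if i: "i < n" for i
  proof -
    let ?a = "srt n x i"
    have iff: "(gp K m j < ?a) = (N j \<le> i)" for j
      using srt_le_iff[OF i, of x "gp K m j"] unfolding N_def by auto
    have "phi K m ?a - cvec K m M i = d * ((\<Sum>j<m. if N j \<le> i then 1 else 0) - (\<Sum>j<m. if M j \<le> i then 1 else (0::real)))"
      unfolding phi_def cvec_def d_def iff by (simp add: algebra_simps)
    also have "\<dots> = d * (\<Sum>j<m. (if N j \<le> i then 1 else 0) - (if M j \<le> i then 1 else (0::real)))"
      by (simp add: sum_subtractf)
    finally have e: "phi K m ?a - cvec K m M i = d * (\<Sum>j<m. (if N j \<le> i then 1 else 0) - (if M j \<le> i then 1 else (0::real)))" .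
    have "\<bar>phi K m ?a - cvec K m M i\<bar> \<le> d * D i"
      unfolding e D_def using d by (simp add: abs_mult sum_abs)
    moreover have "\<bar>phi K m ?a - cvec K m M i\<bar> \<le> 2*K"
      using phi_bounds[OF K m, of ?a] cvec_bounds[OF K m, of M i] by linarith
    ultimately have "\<bar>phi K m ?a - cvec K m M i\<bar> * \<bar>phi K m ?a - cvec K m M i\<bar> \<le> (2*K) * (d * D i)"
      by (intro mult_mono) auto
    then have q: "(phi K m ?a - cvec K m M i)^2 \<le> 2*K*d*D i"
      by (simp add: power2_eq_square abs_mult_self_eq algebra_simps)
    have "(?a - cvec K m M i)^2 \<le> 2 * (?a - phi K m ?a)^2 + 2 * (phi K m ?a - cvec K m M i)^2"
    proof -
      have "(p + q)^2 \<le> 2*p^2 + 2*q^2" for p q :: real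
        using sum_squares_ge_zero[of "p - q" 0] by (simp add: power2_eq_square algebra_simps)
      from this[of "?a - phi K m ?a" "phi K m ?a - cvec K m M i"] show ?thesis by simp
    qed
    with q show ?thesis by simp
  qed
  have "(\<Sum>i<n. (srt n x i - cvec K m M i)^2) \<le> (\<Sum>i<n. 2 * (srt n x i - phi K m (srt n x i))^2 + 2 * (2*K*d * D i))"
    by (rule sum_mono) (use each in auto)
  also have "\<dots> = 2 * (\<Sum>i<n. (srt n x i - phi K m (srt n x i))^2) + 2 * (2*K*d * (\<Sum>i<n. D i))"
    by (simp add: sum.distrib sum_distrib_left)
  also have "(\<Sum>i<n. (srt n x i - phi K m (srt n x i))^2) = (\<Sum>k<n. (x k - phi K m (x k))^2)"
    by (rule srt_sum)
  finally have L: "(\<Sum>i<n. (srt n x i - cvec K m M i)^2) \<le> 2 * (\<Sum>k<n. (x k - phi K m (x k))^2) + 2 * (2*K*d * (\<Sum>i<n. D i))" .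
  have "(\<Sum>i<n. D i) = (\<Sum>j<m. \<Sum>i<n. \<bar>(if N j \<le> i then 1 else 0) - (if M j \<le> i then 1 else (0::real))\<bar>)"
    unfolding D_def by (rule sum.swap)
  also have "\<dots> \<le> (\<Sum>j<m. \<bar>real (N j) - real (M j)\<bar>)"
    by (rule sum_mono) (rule count_diff)
  finally have "2*K*d * (\<Sum>i<n. D i) \<le> 2*K*d * (\<Sum>j<m. \<bar>real (N j) - real (M j)\<bar>)"
    using K d by (intro mult_left_mono) auto
  with L show ?thesis unfolding N_def d_def by simp
qed



lemma N_prob: "prob_space std_normal"
  using real_dist_normal_dist unfolding std_normal_def real_distribution_def by auto

lemma N_sets [measurable_cong]: "sets std_normal = sets borel"
  unfolding std_normal_def by simp

lemma N_space: "space std_normal = UNIV"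
  unfolding std_normal_def by simp

lemma N_x4: "integrable std_normal (\<lambda>x. x^4)" "(\<integral>x. x^4 \<partial>std_normal) = 3"
proof -
  show "integrable std_normal (\<lambda>x. x^4)"
    unfolding std_normal_def by (rule integrable_std_normal_distribution_moment)
  have "(\<integral>x. x^(2*2) \<partial>std_normal) = fact (2 * 2) / (2^2 * fact 2)"
    unfolding std_normal_def by (rule std_normal_distribution_even_moments)
  then show "(\<integral>x. x^4 \<partial>std_normal) = 3" by (simp add: fact_numeral)
qed

abbreviation PP :: "nat \<Rightarrow> (nat \<Rightarrow> real) measure" where
  "PP n \<equiv> PiM {..<n} (\<lambda>_. std_normal)"

lemma PP_prob: "prob_space (PP n)"
  by (rule prob_space_PiM) (simp add: N_prob)

lemma comp_distr: "k < n \<Longrightarrow> distr (PP n) std_normal (\<lambda>x. x k) = std_normal"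
  by (rule distr_PiM_component) (auto simp: N_prob)

lemma comp_integrable:
  fixes h :: "real \<Rightarrow> real"
  assumes "k < n" "h \<in> borel_measurable borel" "integrable std_normal h"
  shows "integrable (PP n) (\<lambda>x. h (x k))"
proof -
  have hm: "h \<in> borel_measurable std_normal" using assms(2) by (simp add: measurable_cong_sets[OF N_sets refl])
  have km: "(\<lambda>x. x k) \<in> measurable (PP n) std_normal" using assms(1) by (intro measurable_component_singleton) auto
  show ?thesis using integrable_distr_eq[OF km hm] assms(3) comp_distr[OF assms(1)] by simp
qed

lemma comp_integral:
  fixes h :: "real \<Rightarrow> real"
  assumes "k < n" "h \<in> borel_measurable borel"
  shows "(\<integral>x. h (x k) \<partial>PP n) = (\<integral>y. h y \<partial>std_normal)"
proof -
  have hm: "h \<in> borel_measurable std_normal" using assms(2) by (simp add: measurable_cong_sets[OF N_sets refl])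
  have km: "(\<lambda>x. x k) \<in> measurable (PP n) std_normal" using assms(1) by (intro measurable_component_singleton) auto
  show ?thesis using integral_distr[OF km hm] comp_distr[OF assms(1)] by simp
qed

lemma comp_indep:
  fixes h :: "real \<Rightarrow> real"
  assumes "k < n" "l < n" "k \<noteq> l" "h \<in> borel_measurable borel" "integrable std_normal h"
    "(\<integral>y. h y \<partial>std_normal) = 0"
  shows "(\<integral>x. h (x k) * h (x l) \<partial>PP n) = 0"
proof -
  interpret product_sigma_finite "\<lambda>_::nat. std_normal"
    unfolding product_sigma_finite_def using N_prob prob_space_imp_sigma_finite by auto
  interpret N: prob_space std_normal by (rule N_prob)
  define f where "f i = (if i \<in> {k, l} then h else (\<lambda>_. 1::real))" for i
  have int: "integrable std_normal (f i)" for i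
    unfolding f_def using assms(5) by auto
  have "(\<integral>x. (\<Prod>i\<in>{..<n}. f i (x i)) \<partial>PP n) = (\<Prod>i\<in>{..<n}. integral\<^sup>L std_normal (f i))"
    by (rule product_integral_prod) (auto simp: int)
  also have "\<dots> = 0"
    using assms(1,6) by (auto simp: f_def intro!: bexI[of _ k])
  finally have P0: "(\<integral>x. (\<Prod>i\<in>{..<n}. f i (x i)) \<partial>PP n) = 0" .
  have "(\<Prod>i\<in>{..<n}. f i (x i)) = h (x k) * h (x l)" for x
  proof -
    have "(\<Prod>i\<in>{..<n}. f i (x i)) = (\<Prod>i\<in>{k,l}. f i (x i))"
      by (rule prod.mono_neutral_right) (use assms(1,2) in \<open>auto simp: f_def\<close>)
    also have "\<dots> = h (x k) * h (x l)" using assms(3) by (simp add: f_def)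
    finally show ?thesis .
  qed
  with P0 show ?thesis by simp
qed



definition pN :: "real \<Rightarrow> real" where "pN t = measure std_normal {..t}"
definition hind :: "real \<Rightarrow> real \<Rightarrow> real" where "hind t y = indicator {..t} y - pN t"

lemma hind_meas [measurable]: "hind t \<in> borel_measurable borel"
  unfolding hind_def by measurable

lemma pN_bounds: "0 \<le> pN t \<and> pN t \<le> 1"
  unfolding pN_def using prob_space.prob_le_1[OF N_prob] by auto

lemma hind_abs: "\<bar>hind t y\<bar> \<le> 1"
  using pN_bounds[of t] unfolding hind_def by (auto simp: indicator_def)

lemma hind_int: "integrable std_normal (hind t)" "(\<integral>y. hind t y \<partial>std_normal) = 0"
proof -
  interpret N: prob_space std_normal by (rule N_prob)
  have "{..t} \<in> sets std_normal" by (simp add: N_sets)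
  show "integrable std_normal (hind t)"
    by (rule N.integrable_const_bound[where B=1]) (auto simp: hind_abs measurable_cong_sets[OF N_sets refl])
  show "(\<integral>y. hind t y \<partial>std_normal) = 0"
  proof -
    have ii: "integrable std_normal (indicator {..t} :: real \<Rightarrow> real)"
      by (rule N.integrable_const_bound[where B=1]) (auto simp: indicator_def measurable_cong_sets[OF N_sets refl])
    have u: "N.prob UNIV = 1" using N.prob_space N_space by simp
    show ?thesis
    unfolding hind_def using \<open>{..t} \<in> sets std_normal\<close> ii u
    by (subst Bochner_Integration.integral_diff) (auto simp: pN_def N_space N.prob_space)
  qed
qed

lemma sumh_meas: "(\<lambda>x. \<Sum>k<n. hind t (x k)) \<in> borel_measurable (PP n)"
  by measurable

lemma hh_int:
  assumes "k < n" "l < n"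
  shows "integrable (PP n) (\<lambda>x. hind t (x k) * hind t (x l))"
proof -
  interpret P: prob_space "PP n" by (rule PP_prob)
  have [measurable]: "(\<lambda>x. x k) \<in> borel_measurable (PP n)" "(\<lambda>x. x l) \<in> borel_measurable (PP n)"
    using assms by (auto intro!: measurable_component_singleton[where M="\<lambda>_. std_normal", simplified N_sets[symmetric]]
       simp: measurable_cong_sets[OF refl N_sets])
  show ?thesis
  proof (rule P.integrable_const_bound[where B=1])
    show "AE x in PP n. norm (hind t (x k) * hind t (x l)) \<le> 1"
      using hind_abs by (auto simp: abs_mult intro!: mult_le_one)
  qed measurable
qed

lemma var_bound:
  "integrable (PP n) (\<lambda>x. (\<Sum>k<n. hind t (x k))^2) \<and> (\<integral>x. (\<Sum>k<n. hind t (x k))^2 \<partial>PP n) \<le> real n"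
proof -
  interpret P: prob_space "PP n" by (rule PP_prob)
  have sq: "(\<Sum>k<n. hind t (x k))^2 = (\<Sum>k<n. \<Sum>l<n. hind t (x k) * hind t (x l))" for x
    by (simp add: power2_eq_square sum_product)
  have intk: "integrable (PP n) (\<lambda>x. \<Sum>l<n. hind t (x k) * hind t (x l))" if "k < n" for k
    using that by (intro Bochner_Integration.integrable_sum hh_int) auto
  have "integrable (PP n) (\<lambda>x. \<Sum>k<n. \<Sum>l<n. hind t (x k) * hind t (x l))"
    by (intro Bochner_Integration.integrable_sum intk) auto
  then have I: "integrable (PP n) (\<lambda>x. (\<Sum>k<n. hind t (x k))^2)" unfolding sq .
  have "(\<integral>x. (\<Sum>k<n. hind t (x k))^2 \<partial>PP n) = (\<Sum>k<n. \<Sum>l<n. \<integral>x. hind t (x k) * hind t (x l) \<partial>PP n)"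
    unfolding sq
    apply (subst Bochner_Integration.integral_sum)
     apply (simp add: intk)
    apply (rule sum.cong[OF refl])
    apply (subst Bochner_Integration.integral_sum)
     apply (simp add: hh_int)
    apply simp
    done
  also have "\<dots> \<le> (\<Sum>k<n. \<Sum>l<n. if k = l then 1 else 0)"
  proof (intro sum_mono)
    fix k l assume k: "k \<in> {..<n}" and l: "l \<in> {..<n}"
    show "(\<integral>x. hind t (x k) * hind t (x l) \<partial>PP n) \<le> (if k = l then 1 else 0)"
    proof (cases "k = l")
      case True
      have "(\<integral>x. hind t (x k) * hind t (x l) \<partial>PP n) \<le> 1"
        using hh_int[of k n l t] k l
      proof (intro P.integral_le_const)
        show "AE x in PP n. hind t (x k) * hind t (x l) \<le> 1"
        proof (rule AE_I2)
          fix x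
          have "\<bar>hind t (x k) * hind t (x l)\<bar> \<le> 1"
            unfolding abs_mult by (rule mult_le_one) (auto simp: hind_abs)
          then show "hind t (x k) * hind t (x l) \<le> 1" by simp
        qed
      qed auto
      then show ?thesis using True by simp
    next
      case False
      have "(\<integral>x. hind t (x k) * hind t (x l) \<partial>PP n) = 0"
        using k l False by (intro comp_indep) (auto simp: hind_int)
      then show ?thesis using False by simp
    qed
  qed
  also have "\<dots> = real n" by simp
  finally show ?thesis using I by simp
qed

lemma card_sum_ind:
  fixes x :: "nat \<Rightarrow> real" and n :: nat
  shows "real (card {k. k<n \<and> x k \<le> t}) = (\<Sum>k<n. indicator {..t} (x k))"
proof -
  have "(\<Sum>k<n. indicator {..t} (x k)) = (\<Sum>k<n. of_bool (x k \<le> t)::real)"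
    by (simp add: indicator_def)
  also have "\<dots> = real (card ({..<n} \<inter> {k. x k \<le> t}))"
    by (rule sum_of_bool_eq) simp_all
  also have "{..<n} \<inter> {k. x k \<le> t} = {k. k<n \<and> x k \<le> t}" by auto
  finally show ?thesis by simp
qed

lemma abs_le_sq: "s > 0 \<Longrightarrow> \<bar>u::real\<bar> \<le> u^2 / s + s"
proof (cases "\<bar>u\<bar> \<le> s")
  case True
  assume "s > 0"
  then show ?thesis using True by (simp add: add_increasing)
next
  case False
  assume s: "s > 0"
  have "\<bar>u\<bar> * s \<le> \<bar>u\<bar> * \<bar>u\<bar>" using False by (intro mult_left_mono) auto
  then have "\<bar>u\<bar> \<le> u^2 / s" using s by (simp add: field_simps power2_eq_square)
  then show ?thesis using s by simp
qed

lemma absdev: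
  fixes t :: real
  assumes n: "n \<ge> 1"
  defines "Mt \<equiv> nat \<lfloor>real n * pN t\<rfloor>"
  shows "integrable (PP n) (\<lambda>x. \<bar>real (card {k. k<n \<and> x k \<le> t}) - real Mt\<bar>)
    \<and> (\<integral>x. \<bar>real (card {k. k<n \<and> x k \<le> t}) - real Mt\<bar> \<partial>PP n) \<le> 1 + 2 * sqrt (real n)"
proof -
  interpret P: prob_space "PP n" by (rule PP_prob)
  define S where "S x = (\<Sum>k<n. hind t (x k))" for x
  have np: "0 \<le> real n * pN t" using pN_bounds by simp
  have Mt: "real Mt \<le> real n * pN t" "real n * pN t < real Mt + 1"
    unfolding Mt_def using np by linarith+
  have e: "real (card {k. k<n \<and> x k \<le> t}) - real Mt = S x + (real n * pN t - real Mt)" for x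
    unfolding card_sum_ind S_def hind_def by (simp add: sum_subtractf)
  define s where "s = sqrt (real n)"
  have s: "s > 0" using n by (simp add: s_def)
  have pt: "\<bar>real (card {k. k<n \<and> x k \<le> t}) - real Mt\<bar> \<le> (S x)^2 / s + s + 1" for x
    using abs_le_sq[OF s, of "S x"] Mt unfolding e by linarith
  have VB: "integrable (PP n) (\<lambda>x. (S x)^2) \<and> (\<integral>x. (S x)^2 \<partial>PP n) \<le> real n"
    unfolding S_def by (rule var_bound)
  have meas: "(\<lambda>x. \<bar>real (card {k. k<n \<and> x k \<le> t}) - real Mt\<bar>) \<in> borel_measurable (PP n)"
    unfolding card_sum_ind by measurable
  have I2: "integrable (PP n) (\<lambda>x. (S x)^2 / s + s + 1)" using VB by auto
  have I1: "integrable (PP n) (\<lambda>x. \<bar>real (card {k. k<n \<and> x k \<le> t}) - real Mt\<bar>)"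
    by (rule Bochner_Integration.integrable_bound[OF I2 meas]) (auto intro!: AE_I2 order_trans[OF pt] simp: add_nonneg_nonneg s less_imp_le)
  have "(\<integral>x. \<bar>real (card {k. k<n \<and> x k \<le> t}) - real Mt\<bar> \<partial>PP n) \<le> (\<integral>x. (S x)^2 / s + s + 1 \<partial>PP n)"
    by (rule integral_mono[OF I1 I2 pt])
  also have "\<dots> = (\<integral>x. (S x)^2 \<partial>PP n) / s + s + 1"
    using VB by (simp add: P.prob_space)
  also have "\<dots> \<le> real n / s + s + 1"
    using VB s by (simp add: divide_right_mono)
  also have "real n / s = s" unfolding s_def by (metis real_div_sqrt of_nat_0_le_iff)
  finally show ?thesis using I1 unfolding s_def by simp
qed



lemma srt_meas:
  assumes "i < n" and f: "\<And>j. j < n \<Longrightarrow> f j \<in> borel_measurable M"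
  shows "(\<lambda>w. srt n (\<lambda>j. f j w) i) \<in> borel_measurable M"
proof -
  have [measurable]: "f j \<in> borel_measurable M" if "j \<in> {..<n}" for j using f that by auto
  have "{w \<in> space M. srt n (\<lambda>j. f j w) i \<le> a} = {w \<in> space M. real i < (\<Sum>k<n. indicator {..a} (f k w))}" for a
  proof -
    have "srt n (\<lambda>j. f j w) i \<le> a \<longleftrightarrow> real i < (\<Sum>k<n. indicator {..a} (f k w))" for w
    proof -
      have c: "real (card {k. k<n \<and> f k w \<le> a}) = (\<Sum>k<n. indicator {..a} (f k w))"
        by (rule card_sum_ind)
      have "srt n (\<lambda>j. f j w) i \<le> a \<longleftrightarrow> i < card {k. k<n \<and> f k w \<le> a}"
        by (rule srt_le_iff[OF assms(1)])
      also have "\<dots> \<longleftrightarrow> real i < real (card {k. k<n \<and> f k w \<le> a})"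
        by (rule of_nat_less_iff[symmetric])
      also have "\<dots> \<longleftrightarrow> real i < (\<Sum>k<n. indicator {..a} (f k w))" unfolding c ..
      finally show ?thesis .
    qed
    then show ?thesis by simp
  qed
  moreover have "{w \<in> space M. real i < (\<Sum>k<n. indicator {..a} (f k w))} \<in> sets M" for a
    by measurable
  ultimately show ?thesis by (simp add: borel_measurable_iff_le)
qed

lemma phi_meas [measurable]: "phi K m \<in> borel_measurable borel"
  unfolding phi_def by measurable

lemma phi_term:
  assumes K: "K > 0" and m: "m > 0" and k: "k < n"
  shows "integrable (PP n) (\<lambda>x. (x k - phi K m (x k))^2)
    \<and> (\<integral>x. (x k - phi K m (x k))^2 \<partial>PP n) \<le> (2*K/real m)^2 + 12 / K^2"
proof -
  interpret N: prob_space std_normal by (rule N_prob)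
  let ?h = "\<lambda>y. (y - phi K m y)^2"
  let ?g = "\<lambda>y. (2*K/real m)^2 + 4 * y^4 / K^2"
  have hm: "?h \<in> borel_measurable borel" by measurable
  have gi: "integrable std_normal ?g" using N_x4(1) by auto
  have hi: "integrable std_normal ?h"
    by (rule Bochner_Integration.integrable_bound[OF gi])
       (auto simp: measurable_cong_sets[OF N_sets refl] intro!: AE_I2 order_trans[OF phi_approx[OF K m]])
  have "(\<integral>y. ?h y \<partial>std_normal) \<le> (\<integral>y. ?g y \<partial>std_normal)"
    by (rule integral_mono[OF hi gi phi_approx[OF K m]])
  also have "\<dots> = (2*K/real m)^2 + 4 * 3 / K^2"
    using N_x4 by (simp add: N.prob_space)
  finally show ?thesis
    using comp_integrable[OF k hm hi] comp_integral[OF k hm] by simp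
qed

lemma comp_meas: "j < n \<Longrightarrow> (\<lambda>x. x j) \<in> borel_measurable (PP n)"
  by (auto intro!: measurable_component_singleton[where M="\<lambda>_. std_normal", simplified N_sets[symmetric]]
       simp: measurable_cong_sets[OF refl N_sets])

lemma main_PP:
  assumes K: "K > 0" and m: "m > 0" and n: "n \<ge> 1"
  shows "integrable (PP n) (\<lambda>x. \<Sum>i<n. (srt n x i - cvec K m (\<lambda>j. nat \<lfloor>real n * pN (gp K m j)\<rfloor>) i)^2)
    \<and> (\<integral>x. (\<Sum>i<n. (srt n x i - cvec K m (\<lambda>j. nat \<lfloor>real n * pN (gp K m j)\<rfloor>) i)^2) \<partial>PP n)
       \<le> 2 * (real n * ((2*K/real m)^2 + 12 / K^2)) + 4*K*(2*K/real m) * (real m * (1 + 2 * sqrt (real n)))"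
proof -
  define Mv where "Mv j = nat \<lfloor>real n * pN (gp K m j)\<rfloor>" for j
  define A where "A x = (\<Sum>k<n. (x k - phi K m (x k))^2)" for x :: "nat \<Rightarrow> real"
  define B where "B x = (\<Sum>j<m. \<bar>real (card {k. k<n \<and> x k \<le> gp K m j}) - real (Mv j)\<bar>)" for x :: "nat \<Rightarrow> real"
  define L where "L x = (\<Sum>i<n. (srt n x i - cvec K m Mv i)^2)" for x
  have IA: "integrable (PP n) A" unfolding A_def
    using phi_term[OF K m] by (intro Bochner_Integration.integrable_sum) auto
  have EA: "(\<integral>x. A x \<partial>PP n) \<le> real n * ((2*K/real m)^2 + 12 / K^2)"
  proof -
    have "(\<integral>x. A x \<partial>PP n) = (\<Sum>k<n. \<integral>x. (x k - phi K m (x k))^2 \<partial>PP n)"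
      unfolding A_def using phi_term[OF K m] by (subst Bochner_Integration.integral_sum) auto
    also have "\<dots> \<le> (\<Sum>k<n. (2*K/real m)^2 + 12 / K^2)"
      using phi_term[OF K m] by (intro sum_mono) auto
    finally show ?thesis by simp
  qed
  have IB: "integrable (PP n) B" unfolding B_def Mv_def
    using absdev[OF n] by (intro Bochner_Integration.integrable_sum) auto
  have EB: "(\<integral>x. B x \<partial>PP n) \<le> real m * (1 + 2 * sqrt (real n))"
  proof -
    have "(\<integral>x. B x \<partial>PP n) = (\<Sum>j<m. \<integral>x. \<bar>real (card {k. k<n \<and> x k \<le> gp K m j}) - real (Mv j)\<bar> \<partial>PP n)"
      unfolding B_def Mv_def using absdev[OF n] by (subst Bochner_Integration.integral_sum) auto
    also have "\<dots> \<le> (\<Sum>j<m. 1 + 2 * sqrt (real n))"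
      unfolding Mv_def using absdev[OF n] by (intro sum_mono) auto
    finally show ?thesis by simp
  qed
  define R where "R x = 2 * A x + 4*K*(2*K/real m) * B x" for x
  have IR: "integrable (PP n) R" unfolding R_def using IA IB by auto
  have ER: "(\<integral>x. R x \<partial>PP n) \<le> 2 * (real n * ((2*K/real m)^2 + 12 / K^2)) + 4*K*(2*K/real m) * (real m * (1 + 2 * sqrt (real n)))"
  proof -
    have "(\<integral>x. R x \<partial>PP n) = 2 * (\<integral>x. A x \<partial>PP n) + 4*K*(2*K/real m) * (\<integral>x. B x \<partial>PP n)"
      unfolding R_def using IA IB by simp
    moreover have "4*K*(2*K/real m) * (\<integral>x. B x \<partial>PP n) \<le> 4*K*(2*K/real m) * (real m * (1 + 2 * sqrt (real n)))"
      using EB K m by (intro mult_left_mono) auto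
    ultimately show ?thesis using EA by linarith
  qed
  have LR: "L x \<le> R x" for x
    unfolding L_def R_def A_def B_def by (rule pointwise[OF K m])
  have [measurable]: "(\<lambda>x. x j) \<in> borel_measurable (PP n)" if "j \<in> {..<n}" for j
    using comp_meas that by auto
  have [measurable]: "(\<lambda>x. srt n x i) \<in> borel_measurable (PP n)" if "i \<in> {..<n}" for i
    using srt_meas[of i n "\<lambda>j x. x j"] comp_meas that by auto
  have Lm: "L \<in> borel_measurable (PP n)" unfolding L_def by measurable
  have IL: "integrable (PP n) L"
    by (rule Bochner_Integration.integrable_bound[OF IR Lm])
       (auto intro!: AE_I2 simp: L_def LR abs_of_nonneg sum_nonneg order_trans[OF _ LR])
  have "(\<integral>x. L x \<partial>PP n) \<le> (\<integral>x. R x \<partial>PP n)" by (rule integral_mono[OF IL IR LR])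
  with ER IL show ?thesis unfolding L_def Mv_def by simp
qed



lemma abs_prod_le: "\<bar>a * b\<bar> \<le> a^2 + (b::real)^2"
proof -
  have "0 \<le> (\<bar>a\<bar> - \<bar>b\<bar>)^2" by simp
  moreover have "(\<bar>a\<bar> - \<bar>b\<bar>)^2 = a^2 + b^2 - 2*(\<bar>a\<bar>*\<bar>b\<bar>)"
    by (simp add: power2_eq_square algebra_simps)
  moreover have "0 \<le> \<bar>a\<bar>*\<bar>b\<bar>" by simp
  ultimately have "\<bar>a\<bar>*\<bar>b\<bar> \<le> a^2 + b^2" by linarith
  then show ?thesis by (simp add: abs_mult)
qed

lemma (in sigma_finite_subalgebra) cond_exp_L2:
  assumes P: "prob_space M" and Vm [measurable]: "V \<in> borel_measurable M"
    and V2: "integrable M (\<lambda>x. (V x)^2)"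
  shows "integrable M (\<lambda>x. (V x - real_cond_exp M F V x)^2)
    \<and> (\<integral>x. (V x - real_cond_exp M F V x)^2 \<partial>M) \<le> (\<integral>x. (V x - c)^2 \<partial>M)"
proof -
  interpret P: prob_space M by (rule P)
  define E where "E = real_cond_exp M F V"
  have IV: "integrable M V" by (rule P.square_integrable_imp_integrable[OF Vm V2])
  have Em [measurable]: "E \<in> borel_measurable M" unfolding E_def by simp
  have EmF: "E \<in> borel_measurable F" unfolding E_def by simp
  have IE2: "integrable M (\<lambda>x. (E x)^2)" unfolding E_def
    by (rule integrable_convex_cond_exp[OF IV, where I=UNIV and q="\<lambda>x. x^2"])
       (auto simp: V2 convex_power2)
  have IE: "integrable M E" by (rule P.square_integrable_imp_integrable[OF Em IE2])
  have IVE: "integrable M (\<lambda>x. V x * E x)"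
  proof (rule Bochner_Integration.integrable_bound[OF Bochner_Integration.integrable_add[OF V2 IE2]])
    show "AE x in M. norm (V x * E x) \<le> norm ((V x)^2 + (E x)^2)"
    proof (rule AE_I2)
      fix x
      have "\<bar>V x * E x\<bar> \<le> (V x)^2 + (E x)^2" by (rule abs_prod_le)
      then show "norm (V x * E x) \<le> norm ((V x)^2 + (E x)^2)" by simp
    qed
  qed measurable
  define f where "f x = E x - c" for x
  have fF: "f \<in> borel_measurable F" unfolding f_def using EmF by measurable
  have IfV: "integrable M (\<lambda>x. f x * V x)" unfolding f_def
    using IVE IV by (simp add: algebra_simps)
  have IfE: "integrable M (\<lambda>x. f x * E x)" unfolding f_def
    using IE2 IE by (simp add: algebra_simps power2_eq_square)
  have If2: "integrable M (\<lambda>x. (f x)^2)" unfolding f_def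
    using IE2 IE by (simp add: algebra_simps power2_eq_square)
  have IVE2: "integrable M (\<lambda>x. (V x - E x)^2)"
  proof -
    have e: "(\<lambda>x. (V x - E x)^2) = (\<lambda>x. ((V x)^2 + (E x)^2) - 2 * (V x * E x))"
      by (simp add: fun_eq_iff power2_eq_square algebra_simps)
    show ?thesis unfolding e
      by (intro Bochner_Integration.integrable_diff Bochner_Integration.integrable_add
          integrable_mult_right V2 IE2 IVE)
  qed
  have key: "(\<integral>x. f x * E x \<partial>M) = (\<integral>x. f x * V x \<partial>M)"
    unfolding E_def by (rule real_cond_exp_intg(2)[OF IfV fF Vm])
  have pw: "(V x - c)^2 = (V x - E x)^2 + (2 * (f x * V x) - 2 * (f x * E x) + (f x)^2)" for x
    unfolding f_def by (simp add: algebra_simps power2_eq_square)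
  have "(\<integral>x. (V x - c)^2 \<partial>M) = (\<integral>x. (V x - E x)^2 \<partial>M) + (2 * (\<integral>x. f x * V x \<partial>M) - 2 * (\<integral>x. f x * E x \<partial>M) + (\<integral>x. (f x)^2 \<partial>M))"
    unfolding pw using IVE2 IfV IfE If2 by simp
  also have "\<dots> = (\<integral>x. (V x - E x)^2 \<partial>M) + (\<integral>x. (f x)^2 \<partial>M)" using key by simp
  finally have "(\<integral>x. (V x - E x)^2 \<partial>M) \<le> (\<integral>x. (V x - c)^2 \<partial>M)"
    by (simp add: integral_nonneg_AE)
  then show ?thesis using IVE2 unfolding E_def by simp
qed

lemma gen_sigma_subalg:
  assumes "\<And>i. i < n \<Longrightarrow> U i \<in> borel_measurable M" and "prob_space M"
  shows "sigma_finite_subalgebra M (gen_sigma M n U)"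
proof -
  let ?G = "{U i -` B \<inter> space M | i B. i < n \<and> B \<in> sets borel}"
  have G1: "?G \<subseteq> Pow (space M)" by auto
  have G2: "?G \<subseteq> sets M" using assms(1) by (auto simp: measurable_sets)
  have sub: "subalgebra M (gen_sigma M n U)"
    unfolding subalgebra_def gen_sigma_def using G1 G2
    by (simp add: sets.sigma_sets_subset)
  have "finite_measure_subalgebra M (gen_sigma M n U)"
    unfolding finite_measure_subalgebra_def finite_measure_subalgebra_axioms_def
    using sub assms(2) prob_space_def by blast
  then show ?thesis by (rule finite_measure_subalgebra_is_sigma_finite)
qed



lemma Om_prob: "prob_space (Omega n)"
  unfolding Omega_def by (intro prob_space_pair PP_prob)

lemma Om_distr: "distr (Omega n) (PP n) fst = PP n"
  unfolding Omega_def by (rule prob_space.distr_pair_fst[OF PP_prob])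

lemma Om_fst_meas: "fst \<in> measurable (Omega n) (PP n)"
  unfolding Omega_def by (rule measurable_fst)

lemma Om_integrable:
  fixes G :: "(nat \<Rightarrow> real) \<Rightarrow> real"
  assumes "G \<in> borel_measurable (PP n)" "integrable (PP n) G"
  shows "integrable (Omega n) (\<lambda>w. G (fst w))"
  using integrable_distr_eq[OF Om_fst_meas[of n] assms(1)] assms(2) Om_distr by simp

lemma Om_integral:
  fixes G :: "(nat \<Rightarrow> real) \<Rightarrow> real"
  assumes "G \<in> borel_measurable (PP n)"
  shows "(\<integral>w. G (fst w) \<partial>Omega n) = (\<integral>x. G x \<partial>PP n)"
  using integral_distr[OF Om_fst_meas[of n] assms(1)] Om_distr by simp

lemma sort_vec_Xv: "sort_vec n Xv i w = srt n (fst w) i"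
  unfolding sort_vec_def Xv_def srt_def by simp

lemma srt_meas_PP: "i < n \<Longrightarrow> (\<lambda>x. srt n x i) \<in> borel_measurable (PP n)"
  using srt_meas[of i n "\<lambda>j x. x j"] comp_meas by auto

lemma sq_int_PP: "integrable (PP n) (\<lambda>x. \<Sum>k<n. (x k)^2)"
proof -
  have "integrable std_normal (\<lambda>y. y^2)"
    unfolding std_normal_def by (rule integrable_std_normal_distribution_moment)
  then show ?thesis
    by (intro Bochner_Integration.integrable_sum comp_integrable) auto
qed

lemma mmse_bound:
  assumes K: "K > 0" and m: "m > 0" and n: "n \<ge> 1"
    and U: "\<And>i. i < n \<Longrightarrow> U i \<in> borel_measurable (Omega n)"
  shows "mmse (Omega n) n (sort_vec n Xv) U
     \<le> 2 * (real n * ((2*K/real m)^2 + 12 / K^2)) + 4*K*(2*K/real m) * (real m * (1 + 2 * sqrt (real n)))"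
proof -
  define F where "F = gen_sigma (Omega n) n U"
  interpret sigma_finite_subalgebra "Omega n" F
    unfolding F_def by (rule gen_sigma_subalg[OF U Om_prob])
  interpret O: prob_space "Omega n" by (rule Om_prob)
  define c where "c = cvec K m (\<lambda>j. nat \<lfloor>real n * pN (gp K m j)\<rfloor>)"
  define V where "V i (w :: (nat \<Rightarrow> real) \<times> (nat \<Rightarrow> real)) = srt n (fst w) i" for i w
  have Vm: "V i \<in> borel_measurable (Omega n)" if "i < n" for i
    unfolding V_def using measurable_compose[OF Om_fst_meas[of n] srt_meas_PP[OF that]] by simp
  have Sm: "(\<lambda>x. \<Sum>k<n. (x k)^2) \<in> borel_measurable (PP n)"
    using sq_int_PP by (rule borel_measurable_integrable)
  have IS: "integrable (Omega n) (\<lambda>w. \<Sum>k<n. (fst w k)^2)"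
    using Om_integrable[OF Sm sq_int_PP] by simp
  have V2: "integrable (Omega n) (\<lambda>w. (V i w)^2)" if i: "i < n" for i
  proof (rule Bochner_Integration.integrable_bound[OF IS])
    show "(\<lambda>w. (V i w)^2) \<in> borel_measurable (Omega n)" using Vm[OF i] by measurable
    show "AE w in Omega n. norm ((V i w)^2) \<le> norm (\<Sum>k<n. (fst w k)^2)"
    proof (rule AE_I2)
      fix w
      have "(V i w)^2 \<le> (\<Sum>j<n. (V j w)^2)"
        using i by (intro member_le_sum) auto
      also have "\<dots> = (\<Sum>k<n. (fst w k)^2)" unfolding V_def by (rule srt_sum)
      finally show "norm ((V i w)^2) \<le> norm (\<Sum>k<n. (fst w k)^2)"
        by (simp add: sum_nonneg)
    qed
  qed
  have each: "integrable (Omega n) (\<lambda>w. (V i w - real_cond_exp (Omega n) F (V i) w)^2)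
    \<and> (\<integral>w. (V i w - real_cond_exp (Omega n) F (V i) w)^2 \<partial>Omega n) \<le> (\<integral>w. (V i w - c i)^2 \<partial>Omega n)"
    if i: "i < n" for i
    by (rule cond_exp_L2[OF Om_prob Vm[OF i] V2[OF i]])
  have IVc: "integrable (Omega n) (\<lambda>w. (V i w - c i)^2)" if i: "i < n" for i
  proof -
    have IV: "integrable (Omega n) (V i)" by (rule O.square_integrable_imp_integrable[OF Vm[OF i] V2[OF i]])
    have e: "(\<lambda>w. (V i w - c i)^2) = (\<lambda>w. ((V i w)^2 + (c i)^2) - 2 * c i * V i w)"
      by (simp add: fun_eq_iff power2_eq_square algebra_simps)
    show ?thesis unfolding e
      by (intro Bochner_Integration.integrable_diff Bochner_Integration.integrable_add
          integrable_mult_right V2[OF i] IV) simp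
  qed
  have sv: "sort_vec n Xv = V" by (simp add: fun_eq_iff V_def sort_vec_Xv)
  have "mmse (Omega n) n (sort_vec n Xv) U = (\<integral>w. (\<Sum>i<n. (V i w - real_cond_exp (Omega n) F (V i) w)^2) \<partial>Omega n)"
    unfolding mmse_def sv F_def ..
  also have "\<dots> = (\<Sum>i<n. \<integral>w. (V i w - real_cond_exp (Omega n) F (V i) w)^2 \<partial>Omega n)"
    using each by (subst Bochner_Integration.integral_sum) auto
  also have "\<dots> \<le> (\<Sum>i<n. \<integral>w. (V i w - c i)^2 \<partial>Omega n)"
    using each by (intro sum_mono) auto
  also have "\<dots> = (\<integral>w. (\<Sum>i<n. (V i w - c i)^2) \<partial>Omega n)"
    using IVc by (subst Bochner_Integration.integral_sum) auto
  also have "\<dots> = (\<integral>x. (\<Sum>i<n. (srt n x i - c i)^2) \<partial>PP n)"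
  proof -
    have IL: "integrable (PP n) (\<lambda>x. \<Sum>i<n. (srt n x i - c i)^2)"
      using main_PP[OF K m n] unfolding c_def by blast
    have Lm: "(\<lambda>x. \<Sum>i<n. (srt n x i - c i)^2) \<in> borel_measurable (PP n)"
      using IL by (rule borel_measurable_integrable)
    show ?thesis unfolding V_def using Om_integral[OF Lm] by simp
  qed
  also have "\<dots> \<le> 2 * (real n * ((2*K/real m)^2 + 12 / K^2)) + 4*K*(2*K/real m) * (real m * (1 + 2 * sqrt (real n)))"
    using main_PP[OF K m n] unfolding c_def by blast
  finally show ?thesis .
qed

lemma mmse_nonneg: "0 \<le> mmse M n V U"
  unfolding mmse_def by (intro integral_nonneg_AE AE_I2 sum_nonneg) auto



lemma Om_snd_meas: "snd \<in> measurable (Omega n) (PP n)"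
  unfolding Omega_def by (rule measurable_snd)

lemma Yv_meas: "j < n \<Longrightarrow> Yv \<sigma> j \<in> borel_measurable (Omega n)"
proof -
  assume j: "j < n"
  have [measurable]: "(\<lambda>w. fst w j) \<in> borel_measurable (Omega n)"
    using measurable_compose[OF Om_fst_meas[of n] comp_meas[OF j]] by simp
  have [measurable]: "(\<lambda>w. snd w j) \<in> borel_measurable (Omega n)"
    using measurable_compose[OF Om_snd_meas[of n] comp_meas[OF j]] by simp
  show ?thesis unfolding Yv_def by measurable
qed

lemma sortY_meas: "i < n \<Longrightarrow> sort_vec n (Yv \<sigma>) i \<in> borel_measurable (Omega n)"
proof -
  assume i: "i < n"
  have "sort_vec n (Yv \<sigma>) i = (\<lambda>w. srt n (\<lambda>j. Yv \<sigma> j w) i)"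
    by (simp add: fun_eq_iff sort_vec_def srt_def)
  also have "\<dots> \<in> borel_measurable (Omega n)"
    by (rule srt_meas[OF i Yv_meas])
  finally show ?thesis .
qed

lemma bound_k:
  assumes n: "n \<ge> 1" and k: "k \<ge> 1"
    and U: "\<And>i. i < n \<Longrightarrow> U i \<in> borel_measurable (Omega n)"
  shows "mmse (Omega n) n (sort_vec n Xv) U / real n \<le> 26 / (real k)^2 + 8 * (real k)^2 * ((1 + 2 * sqrt (real n)) / real n)"
proof -
  have K: "real k > 0" using k by simp
  have m: "2 * k^2 > 0" using k by simp
  have B: "mmse (Omega n) n (sort_vec n Xv) U \<le> 2 * (real n * ((2*real k/real (2*k^2))^2 + 12 / (real k)^2)) + 4*real k*(2*real k/real (2*k^2)) * (real (2*k^2) * (1 + 2 * sqrt (real n)))"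
    by (rule mmse_bound[OF K m n U])
  have e: "2 * (real n * ((2*real k/real (2*k^2))^2 + 12 / (real k)^2)) + 4*real k*(2*real k/real (2*k^2)) * (real (2*k^2) * (1 + 2 * sqrt (real n)))
     = real n * (26 / (real k)^2 + 8 * (real k)^2 * ((1 + 2 * sqrt (real n)) / real n))"
    using K n by (simp add: field_simps power2_eq_square)
  have np: "real n > 0" using n by simp
  show ?thesis using B unfolding e using np by (simp add: divide_le_eq mult.commute)
qed

lemma lim_lemma:
  fixes f :: "nat \<Rightarrow> real"
  assumes nn: "\<And>n. 0 \<le> f n"
    and b: "\<And>n k. n \<ge> 1 \<Longrightarrow> k \<ge> 1 \<Longrightarrow> f n \<le> 26 / (real k)^2 + 8 * (real k)^2 * ((1 + 2 * sqrt (real n)) / real n)"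
  shows "(f \<longlongrightarrow> 0) sequentially"
proof (rule tendstoI)
  fix e :: real assume e: "e > 0"
  obtain k :: nat where k: "k \<ge> 1" "real k > 52 / e"
    by (metis reals_Archimedean2 less_eq_real_def max.cobounded1 max.cobounded2 of_nat_le_iff
        of_nat_max order_less_le_trans of_nat_1)
  have "26 / (real k)^2 \<le> 26 / real k"
    using k by (intro divide_left_mono) (auto simp: power2_eq_square)
  also have "26 / real k < e / 2"
    using k e by (simp add: field_simps)
  finally have k2: "26 / (real k)^2 < e / 2" .
  have h: "((\<lambda>n. (1 + 2 * sqrt (real n)) / real n) \<longlongrightarrow> 0) sequentially" by real_asymp
  have "((\<lambda>n. 8 * (real k)^2 * ((1 + 2 * sqrt (real n)) / real n)) \<longlongrightarrow> 8 * (real k)^2 * 0) sequentially"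
    by (intro tendsto_mult_left h)
  then have ev: "eventually (\<lambda>n. 8 * (real k)^2 * ((1 + 2 * sqrt (real n)) / real n) < e / 2) sequentially"
    using e by (intro order_tendstoD(2)) auto
  moreover have "eventually (\<lambda>n. n \<ge> (1::nat)) sequentially" by (rule eventually_ge_at_top)
  ultimately show "eventually (\<lambda>n. dist (f n) 0 < e) sequentially"
  proof eventually_elim
    case (elim n)
    have "f n \<le> 26 / (real k)^2 + 8 * (real k)^2 * ((1 + 2 * sqrt (real n)) / real n)"
      using b[OF elim(2) k(1)] .
    then show ?case using elim(1) k2 nn[of n] by simp
  qed
qed

theorem corollary1:
  fixes \<sigma> :: real
  assumes "\<sigma> > 0"
  shows "((\<lambda>n. mmse (Omega n) n (sort_vec n Xv) (sort_vec n (Yv \<sigma>)) / real n) \<longlongrightarrow> 0) sequentially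
       \<and> ((\<lambda>n. mmse (Omega n) n (sort_vec n Xv) (Yv \<sigma>) / real n) \<longlongrightarrow> 0) sequentially"
proof
  show "((\<lambda>n. mmse (Omega n) n (sort_vec n Xv) (sort_vec n (Yv \<sigma>)) / real n) \<longlongrightarrow> 0) sequentially"
  proof (rule lim_lemma)
    fix n show "0 \<le> mmse (Omega n) n (sort_vec n Xv) (sort_vec n (Yv \<sigma>)) / real n"
      by (intro divide_nonneg_nonneg mmse_nonneg) auto
  next
    fix n k :: nat assume "n \<ge> 1" "k \<ge> 1"
    then show "mmse (Omega n) n (sort_vec n Xv) (sort_vec n (Yv \<sigma>)) / real n
       \<le> 26 / (real k)^2 + 8 * (real k)^2 * ((1 + 2 * sqrt (real n)) / real n)"
      by (rule bound_k) (rule sortY_meas)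
  qed
  show "((\<lambda>n. mmse (Omega n) n (sort_vec n Xv) (Yv \<sigma>) / real n) \<longlongrightarrow> 0) sequentially"
  proof (rule lim_lemma)
    fix n show "0 \<le> mmse (Omega n) n (sort_vec n Xv) (Yv \<sigma>) / real n"
      by (intro divide_nonneg_nonneg mmse_nonneg) auto
  next
    fix n k :: nat assume "n \<ge> 1" "k \<ge> 1"
    then show "mmse (Omega n) n (sort_vec n Xv) (Yv \<sigma>) / real n
       \<le> 26 / (real k)^2 + 8 * (real k)^2 * ((1 + 2 * sqrt (real n)) / real n)"
      by (rule bound_k) (rule Yv_meas)
  qed
qed


end
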